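(* Let $\hookrightarrow$ and $\simeq$ be as in the context. Then: (1) $\hookrightarrow$ is confluent; (2) for all terms $M, N, N'$, if $M \simeq N$ and $N \hookrightarrow N'$, then there is a term $M'$ with $M \hookrightarrow M'$ and $M' \simeq N'$; (3) for all terms $M, N$, if $M \equiv N$ then there are terms $M', N'$ with $M \hookrightarrow^* M'$, $N \hookrightarrow^* N'$ and $M' \simeq N'$.
   Context: Terms are given by $M, N, A, B ::= x \mid c \mid M\,N \mid \lambda x : A.\,M \mid \Pi x : A.\,B \mid \mathbf{Type} \mid \mathbf{Kind}$, with $x$ ranging over variables and $c$ over constants. The constants include $Level, \mathtt{z}, \mathtt{s}, \sqcup$ (written infix), $U, El, u, \pi$. Level expressions are terms generated by $l ::= i \mid \mathtt{z} \mid \mathtt{s}\,l \mid l \sqcup l'$ where $i$ ranges over a distinguished infinite set $\mathcal{I}$ of level variables; level variables may only be substituted by level expressions. Fix a signature containing definitions $c : A := M$. The one-step reduction $\hookrightarrow$ is the closure under contexts (and, for the rewrite rules, substitutions) of: $\beta$-reduction $(\lambda x : A.\,M)\,N \hookrightarrow M\{N/x\}$; the rewrite rules $El~i'~(u~i) \hookrightarrow U~i$ and $El~i'~(\pi~i_A~i_B~A~B) \hookrightarrow \Pi x : El~i_A~A.\, El~i_B~(B~x)$; and $\delta$-rules $c \hookrightarrow M$ for each definition $c : A := M$ in the signature. $\hookrightarrow^*$ is its reflexive-transitive closure. The relation $\simeq$ on terms is the smallest congruence (reflexive, symmetric, transitive, closed under all term constructors and under substitution, with level variables instantiated only by levels)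 containing the level equations $i_1 \sqcup (i_2 \sqcup i_3) \approx (i_1 \sqcup i_2) \sqcup i_3$, $i_1 \sqcup i_2 \approx i_2 \sqcup i_1$, $\mathtt{s}\,(i_1 \sqcup i_2) \approx \mathtt{s}\,i_1 \sqcup \mathtt{s}\,i_2$, $i \sqcup \mathtt{s}\,i \approx \mathtt{s}\,i$, $i \sqcup \mathtt{z} \approx i$, $i \sqcup i \approx i$. $\equiv$ is the reflexive, symmetric, transitive closure of $\hookrightarrow \cup \simeq$. *)

theory Defs
  imports Main "HOL-Library.Confluence"
begin

text \<open>Terms with de Bruijn indices.  There are two separate variable namespaces:
  ordinary variables (kind Ord) and level variables (kind Lev, the set I).
  A binder (lambda or Pi) binds index 0 of the namespace given by its kind flag.\<close>

datatype vkind = Ord | Lev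

datatype 'c const =
    CLevel | Cz | Cs | Cmax | CU | CEl | Cu | Cpi
  | CUser 'c

datatype 'c trm =
    Var vkind nat
  | Cst "'c const"
  | App "'c trm" "'c trm"
  | Lam vkind "'c trm" "'c trm"    \<comment> \<open>Lam k A M = lambda x : A. M, x of kind k\<close>
  | Pi vkind "'c trm" "'c trm"     \<comment> \<open>Pi k A B = Pi x : A. B, x of kind k\<close>
  | TypeS
  | KindS

fun lift :: "vkind \<Rightarrow> nat \<Rightarrow> 'c trm \<Rightarrow> 'c trm" where
  "lift k d (Var k' n) = (if k' = k \<and> d \<le> n then Var k' (Suc n) else Var k' n)"
| "lift k d (Cst c) = Cst c"
| "lift k d (App M N) = App (lift k d M) (lift k d N)"
| "lift k d (Lam k' A M) = Lam k' (lift k d A) (lift k (if k' = k then Suc d else d) M)"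
| "lift k d (Pi k' A M) = Pi k' (lift k d A) (lift k (if k' = k then Suc d else d) M)"
| "lift k d TypeS = TypeS"
| "lift k d KindS = KindS"

fun subst :: "vkind \<Rightarrow> nat \<Rightarrow> 'c trm \<Rightarrow> 'c trm \<Rightarrow> 'c trm" where
  "subst k d N (Var k' n) =
     (if k' = k then (if n < d then Var k' n else if n = d then N else Var k' (n - 1))
      else Var k' n)"
| "subst k d N (Cst c) = Cst c"
| "subst k d N (App M P) = App (subst k d N M) (subst k d N P)"
| "subst k d N (Lam k' A M) =
     Lam k' (subst k d N A) (subst k (if k' = k then Suc d else d) (lift k' 0 N) M)"
| "subst k d N (Pi k' A M) =
     Pi k' (subst k d N A) (subst k (if k' = k then Suc d else d) (lift k' 0 N) M)"
| "subst k d N TypeS = TypeS"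
| "subst k d N KindS = KindS"

fun fvs :: "'c trm \<Rightarrow> (vkind \<times> nat) set" where
  "fvs (Var k n) = {(k, n)}"
| "fvs (Cst c) = {}"
| "fvs (App M N) = fvs M \<union> fvs N"
| "fvs (Lam k A M) = fvs A \<union> {(k', n) | k' n. (if k' = k then (k', Suc n) else (k', n)) \<in> fvs M}"
| "fvs (Pi k A M) = fvs A \<union> {(k', n) | k' n. (if k' = k then (k', Suc n) else (k', n)) \<in> fvs M}"
| "fvs TypeS = {}"
| "fvs KindS = {}"

definition closed :: "'c trm \<Rightarrow> bool" where
  "closed M \<longleftrightarrow> fvs M = {}"

abbreviation zL :: "'c trm" where "zL \<equiv> Cst Cz"
abbreviation sL :: "'c trm \<Rightarrow> 'c trm" where "sL l \<equiv> App (Cst Cs) l"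
abbreviation maxL :: "'c trm \<Rightarrow> 'c trm \<Rightarrow> 'c trm" (infixl "\<squnion>\<^sub>L" 65) where
  "l \<squnion>\<^sub>L l' \<equiv> App (App (Cst Cmax) l) l'"
abbreviation UT :: "'c trm \<Rightarrow> 'c trm" where "UT i \<equiv> App (Cst CU) i"
abbreviation ElT :: "'c trm \<Rightarrow> 'c trm \<Rightarrow> 'c trm" where "ElT i A \<equiv> App (App (Cst CEl) i) A"
abbreviation uT :: "'c trm \<Rightarrow> 'c trm" where "uT i \<equiv> App (Cst Cu) i"
abbreviation piT :: "'c trm \<Rightarrow> 'c trm \<Rightarrow> 'c trm \<Rightarrow> 'c trm \<Rightarrow> 'c trm" where
  "piT iA iB A B \<equiv> App (App (App (App (Cst Cpi) iA) iB) A) B"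

inductive is_level :: "'c trm \<Rightarrow> bool" where
  lv_var: "is_level (Var Lev n)"
| lv_z: "is_level zL"
| lv_s: "is_level l \<Longrightarrow> is_level (sL l)"
| lv_max: "is_level l \<Longrightarrow> is_level l' \<Longrightarrow> is_level (l \<squnion>\<^sub>L l')"

text \<open>A signature: a partial map from user constants to definitions c : A := M
  (pair (A, M)).  Definition bodies are required to be closed (see assumptions
  of the theorem).\<close>
type_synonym 'c signature = "'c \<Rightarrow> ('c trm \<times> 'c trm) option"

inductive step :: "'c signature \<Rightarrow> 'c trm \<Rightarrow> 'c trm \<Rightarrow> bool" for \<Sigma> where
  beta: "k = Ord \<or> is_level N \<Longrightarrow> step \<Sigma> (App (Lam k A M) N) (subst k 0 N M)"
| rw_u: "is_level i' \<Longrightarrow> is_level i \<Longrightarrow> step \<Sigma> (ElT i' (uT i)) (UT i)"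
| rw_pi: "is_level i' \<Longrightarrow> is_level iA \<Longrightarrow> is_level iB \<Longrightarrow>
    step \<Sigma> (ElT i' (piT iA iB A B))
      (Pi Ord (ElT iA A) (ElT (lift Ord 0 iB) (App (lift Ord 0 B) (Var Ord 0))))"
| delta: "\<Sigma> c = Some (A, M) \<Longrightarrow> step \<Sigma> (Cst (CUser c)) M"
| app1: "step \<Sigma> M M' \<Longrightarrow> step \<Sigma> (App M N) (App M' N)"
| app2: "step \<Sigma> N N' \<Longrightarrow> step \<Sigma> (App M N) (App M N')"
| lam1: "step \<Sigma> A A' \<Longrightarrow> step \<Sigma> (Lam k A M) (Lam k A' M)"
| lam2: "step \<Sigma> M M' \<Longrightarrow> step \<Sigma> (Lam k A M) (Lam k A M')"
| pi1: "step \<Sigma> A A' \<Longrightarrow> step \<Sigma> (Pi k A M) (Pi k A' M)"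
| pi2: "step \<Sigma> M M' \<Longrightarrow> step \<Sigma> (Pi k A M) (Pi k A M')"

inductive leveq :: "'c trm \<Rightarrow> 'c trm \<Rightarrow> bool" where
  ax_assoc: "is_level l1 \<Longrightarrow> is_level l2 \<Longrightarrow> is_level l3 \<Longrightarrow>
    leveq (l1 \<squnion>\<^sub>L (l2 \<squnion>\<^sub>L l3)) ((l1 \<squnion>\<^sub>L l2) \<squnion>\<^sub>L l3)"
| ax_comm: "is_level l1 \<Longrightarrow> is_level l2 \<Longrightarrow> leveq (l1 \<squnion>\<^sub>L l2) (l2 \<squnion>\<^sub>L l1)"
| ax_sdist: "is_level l1 \<Longrightarrow> is_level l2 \<Longrightarrow> leveq (sL (l1 \<squnion>\<^sub>L l2)) (sL l1 \<squnion>\<^sub>L sL l2)"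
| ax_ssub: "is_level l \<Longrightarrow> leveq (l \<squnion>\<^sub>L sL l) (sL l)"
| ax_zero: "is_level l \<Longrightarrow> leveq (l \<squnion>\<^sub>L zL) l"
| ax_idem: "is_level l \<Longrightarrow> leveq (l \<squnion>\<^sub>L l) l"
| refl: "leveq M M"
| sym: "leveq M N \<Longrightarrow> leveq N M"
| trans: "leveq M N \<Longrightarrow> leveq N P \<Longrightarrow> leveq M P"
| cong_app: "leveq M M' \<Longrightarrow> leveq N N' \<Longrightarrow> leveq (App M N) (App M' N')"
| cong_lam: "leveq A A' \<Longrightarrow> leveq M M' \<Longrightarrow> leveq (Lam k A M) (Lam k A' M')"
| cong_pi: "leveq A A' \<Longrightarrow> leveq M M' \<Longrightarrow> leveq (Pi k A M) (Pi k A' M')"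
| subst_cl: "leveq M N \<Longrightarrow> k = Ord \<or> is_level P \<Longrightarrow> leveq (subst k d P M) (subst k d P N)"

definition conv :: "'c signature \<Rightarrow> 'c trm \<Rightarrow> 'c trm \<Rightarrow> bool" where
  "conv \<Sigma> = equivclp (\<lambda>M N. step \<Sigma> M N \<or> leveq M N)"

end

theory Submission
  imports Defs
begin


definition upr :: "vkind \<Rightarrow> (vkind \<Rightarrow> nat \<Rightarrow> nat) \<Rightarrow> vkind \<Rightarrow> nat \<Rightarrow> nat" where
  "upr k \<xi> k' n = (if k' = k then (case n of 0 \<Rightarrow> 0 | Suc m \<Rightarrow> Suc (\<xi> k' m)) else \<xi> k' n)"

fun ren :: "(vkind \<Rightarrow> nat \<Rightarrow> nat) \<Rightarrow> 'c trm \<Rightarrow> 'c trm" where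
  "ren \<xi> (Var k n) = Var k (\<xi> k n)"
| "ren \<xi> (Cst c) = Cst c"
| "ren \<xi> (App M N) = App (ren \<xi> M) (ren \<xi> N)"
| "ren \<xi> (Lam k A M) = Lam k (ren \<xi> A) (ren (upr k \<xi>) M)"
| "ren \<xi> (Pi k A M) = Pi k (ren \<xi> A) (ren (upr k \<xi>) M)"
| "ren \<xi> TypeS = TypeS"
| "ren \<xi> KindS = KindS"

definition sh :: "vkind \<Rightarrow> nat \<Rightarrow> vkind \<Rightarrow> nat \<Rightarrow> nat" where
  "sh k d k' n = (if k' = k \<and> d \<le> n then Suc n else n)"

lemma upr_sh: "upr k' (sh k d) = sh k (if k' = k then Suc d else d)"
  by (auto simp: upr_def sh_def fun_eq_iff split: nat.split)

lemma lift_ren: "lift k d M = ren (sh k d) M"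
  by (induction M arbitrary: d) (auto simp: upr_sh sh_def)

definition up :: "vkind \<Rightarrow> (vkind \<Rightarrow> nat \<Rightarrow> 'c trm) \<Rightarrow> vkind \<Rightarrow> nat \<Rightarrow> 'c trm" where
  "up k \<sigma> k' n = (if k' = k then (case n of 0 \<Rightarrow> Var k' 0 | Suc m \<Rightarrow> lift k 0 (\<sigma> k' m))
                      else lift k 0 (\<sigma> k' n))"

fun sb :: "(vkind \<Rightarrow> nat \<Rightarrow> 'c trm) \<Rightarrow> 'c trm \<Rightarrow> 'c trm" where
  "sb \<sigma> (Var k n) = \<sigma> k n"
| "sb \<sigma> (Cst c) = Cst c"
| "sb \<sigma> (App M N) = App (sb \<sigma> M) (sb \<sigma> N)"
| "sb \<sigma> (Lam k A M) = Lam k (sb \<sigma> A) (sb (up k \<sigma>) M)"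
| "sb \<sigma> (Pi k A M) = Pi k (sb \<sigma> A) (sb (up k \<sigma>) M)"
| "sb \<sigma> TypeS = TypeS"
| "sb \<sigma> KindS = KindS"

definition ss :: "vkind \<Rightarrow> nat \<Rightarrow> 'c trm \<Rightarrow> vkind \<Rightarrow> nat \<Rightarrow> 'c trm" where
  "ss k d N k' n = (if k' = k then (if n < d then Var k' n else if n = d then N else Var k' (n - 1))
                       else Var k' n)"

lemma up_ss: "up k' (ss k d N) = ss k (if k' = k then Suc d else d) (lift k' 0 N)"
  by (auto simp: up_def ss_def fun_eq_iff split: nat.split)

lemma subst_sb: "subst k d N M = sb (ss k d N) M"
  by (induction M arbitrary: d N) (auto simp: up_ss ss_def)

lemma upr_comp: "(\<lambda>k' n. upr k \<xi> k' (upr k \<zeta> k' n)) = upr k (\<lambda>k n. \<xi> k (\<zeta> k n))"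
  by (auto simp: upr_def fun_eq_iff split: nat.split)

lemma ren_ren: "ren \<xi> (ren \<zeta> M) = ren (\<lambda>k n. \<xi> k (\<zeta> k n)) M"
  by (induction M arbitrary: \<xi> \<zeta>) (auto simp: upr_comp)

lemma up_upr: "(\<lambda>k' n. up k \<sigma> k' (upr k \<xi> k' n)) = up k (\<lambda>k n. \<sigma> k (\<xi> k n))"
  by (auto simp: upr_def up_def fun_eq_iff split: nat.split)

lemma sb_ren: "sb \<sigma> (ren \<xi> M) = sb (\<lambda>k n. \<sigma> k (\<xi> k n)) M"
  by (induction M arbitrary: \<sigma> \<xi>) (auto simp: up_upr)

lemma ren_lift0: "ren (upr k \<xi>) (lift k 0 X) = lift k 0 (ren \<xi> X)"
proof -
  have "(\<lambda>k' n. upr k \<xi> k' (sh k 0 k' n)) = (\<lambda>k' n. sh k 0 k' (\<xi> k' n))"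
    by (auto simp: upr_def sh_def fun_eq_iff)
  then show ?thesis by (simp add: lift_ren ren_ren)
qed

lemma upr_up: "(\<lambda>k' n. ren (upr k \<xi>) (up k \<sigma> k' n)) = up k (\<lambda>k n. ren \<xi> (\<sigma> k n))"
  by (auto simp: upr_def up_def fun_eq_iff ren_lift0 split: nat.split)

lemma ren_sb: "ren \<xi> (sb \<sigma> M) = sb (\<lambda>k n. ren \<xi> (\<sigma> k n)) M"
  by (induction M arbitrary: \<sigma> \<xi>) (auto simp: upr_up)

lemma sb_lift0: "sb (up k \<sigma>) (lift k 0 X) = lift k 0 (sb \<sigma> X)"
proof -
  have "(\<lambda>k' n. up k \<sigma> k' (sh k 0 k' n)) = (\<lambda>k' n. ren (sh k 0) (\<sigma> k' n))"
    by (auto simp: up_def sh_def fun_eq_iff lift_ren)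
  then show ?thesis by (simp add: lift_ren sb_ren ren_sb)
qed

lemma up_up: "(\<lambda>k' n. sb (up k \<sigma>) (up k \<tau> k' n)) = up k (\<lambda>k n. sb \<sigma> (\<tau> k n))"
  by (auto simp: up_def fun_eq_iff sb_lift0 split: nat.split)

lemma sb_sb: "sb \<sigma> (sb \<tau> M) = sb (\<lambda>k n. sb \<sigma> (\<tau> k n)) M"
  by (induction M arbitrary: \<sigma> \<tau>) (auto simp: up_up)

lemma up_var: "up k (\<lambda>k n. Var k n) = (\<lambda>k n. Var k n)"
  by (auto simp: up_def fun_eq_iff split: nat.split)

lemma sb_var: "sb (\<lambda>k n. Var k n) M = M"
  by (induction M) (auto simp: up_var)

lemma ren_as_sb: "ren \<xi> M = sb (\<lambda>k n. Var k (\<xi> k n)) M"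
  using sb_ren[of "\<lambda>k n. Var k n" \<xi> M] by (simp add: sb_var)

lemma subst_lift0: "subst k 0 N (lift k 0 M) = M"
proof -
  have "(\<lambda>k' n. ss k 0 N k' (sh k 0 k' n)) = (\<lambda>k n. Var k n)"
    by (auto simp: ss_def sh_def fun_eq_iff)
  then show ?thesis by (simp add: subst_sb lift_ren sb_ren sb_var)
qed

lemma sb_subst0: "sb \<sigma> (subst k 0 N M) = subst k 0 (sb \<sigma> N) (sb (up k \<sigma>) M)"
proof -
  have "(\<lambda>k' n. sb \<sigma> (ss k 0 N k' n)) = (\<lambda>k' n. sb (ss k 0 (sb \<sigma> N)) (up k \<sigma> k' n))"
    by (auto simp: ss_def up_def fun_eq_iff subst_lift0[unfolded subst_sb] split: nat.split)
  then show ?thesis by (simp add: subst_sb sb_sb)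
qed

lemma up_varren: "up k (\<lambda>k n. Var k (\<xi> k n)) = (\<lambda>k' n. Var k' (upr k \<xi> k' n))"
  by (auto simp: up_def upr_def fun_eq_iff split: nat.split)

lemma ren_subst0: "ren \<xi> (subst k 0 N M) = subst k 0 (ren \<xi> N) (ren (upr k \<xi>) M)"
  unfolding ren_as_sb sb_subst0 up_varren ..

lemma lift_subst: "lift k d (subst k0 d0 P M) =
  subst k0 (if k = k0 \<and> d \<le> d0 then Suc d0 else d0) (lift k d P) (lift k (if k = k0 \<and> d0 < d then Suc d else d) M)"
proof -
  have "(\<lambda>k' n. ren (sh k d) (ss k0 d0 P k' n)) =
     (\<lambda>k' n. ss k0 (if k = k0 \<and> d \<le> d0 then Suc d0 else d0) (lift k d P) k' (sh k (if k = k0 \<and> d0 < d then Suc d else d) k' n))"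
    by (auto simp: ss_def sh_def fun_eq_iff lift_ren)
  then show ?thesis by (simp add: subst_sb lift_ren ren_sb sb_ren)
qed

lemma sb_closed: "(\<forall>p\<in>fvs M. \<sigma> (fst p) (snd p) = Var (fst p) (snd p)) \<Longrightarrow> sb \<sigma> M = M"
proof (induction M arbitrary: \<sigma>)
  case (Lam k A M)
  have "\<forall>p\<in>fvs M. up k \<sigma> (fst p) (snd p) = Var (fst p) (snd p)"
  proof
    fix p assume p: "p \<in> fvs M"
    obtain k' n where pk: "p = (k', n)" by force
    show "up k \<sigma> (fst p) (snd p) = Var (fst p) (snd p)"
    proof (cases "k' = k")
      case True
      then show ?thesis
      proof (cases n)
        case (Suc m)
        with p pk True have "(k, m) \<in> fvs (Lam k A M)" by auto
        with Lam.prems have "\<sigma> k m = Var k m" by fastforce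
        then show ?thesis using pk True Suc by (simp add: up_def)
      qed (simp add: up_def pk True)
    next
      case False
      with p pk have "(k', n) \<in> fvs (Lam k A M)" by auto
      with Lam.prems have "\<sigma> k' n = Var k' n" by fastforce
      then show ?thesis using pk False by (simp add: up_def)
    qed
  qed
  then show ?case using Lam by auto
next
  case (Pi k A M)
  have "\<forall>p\<in>fvs M. up k \<sigma> (fst p) (snd p) = Var (fst p) (snd p)"
  proof
    fix p assume p: "p \<in> fvs M"
    obtain k' n where pk: "p = (k', n)" by force
    show "up k \<sigma> (fst p) (snd p) = Var (fst p) (snd p)"
    proof (cases "k' = k")
      case True
      then show ?thesis
      proof (cases n)
        case (Suc m)
        with p pk True have "(k, m) \<in> fvs (Pi k A M)" by auto
        with Pi.prems have "\<sigma> k m = Var k m" by fastforce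
        then show ?thesis using pk True Suc by (simp add: up_def)
      qed (simp add: up_def pk True)
    next
      case False
      with p pk have "(k', n) \<in> fvs (Pi k A M)" by auto
      with Pi.prems have "\<sigma> k' n = Var k' n" by fastforce
      then show ?thesis using pk False by (simp add: up_def)
    qed
  qed
  then show ?case using Pi by auto
qed auto

lemma closed_sb: "closed M \<Longrightarrow> sb \<sigma> M = M"
  by (simp add: closed_def sb_closed)

lemma closed_ren: "closed M \<Longrightarrow> ren \<xi> M = M"
  by (simp add: ren_as_sb closed_sb)

lemma closed_lift: "closed M \<Longrightarrow> lift k d M = M"
  by (simp add: lift_ren closed_ren)




inductive_simps lv_simps[simp]: "is_level (Var k n)" "is_level (Cst c)" "is_level (App M N)"
  "is_level (Lam k A B)" "is_level (Pi k A B)" "is_level TypeS" "is_level KindS"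

lemma lv_ren: "is_level l \<Longrightarrow> is_level (ren \<xi> l)"
  by (induction rule: is_level.induct) auto

lemma lv_lift: "is_level l \<Longrightarrow> is_level (lift k d l)"
  by (simp add: lift_ren lv_ren)

definition good :: "(vkind \<Rightarrow> nat \<Rightarrow> 'c trm) \<Rightarrow> bool" where
  "good \<sigma> \<longleftrightarrow> (\<forall>n. is_level (\<sigma> Lev n))"

lemma lv_sb: "is_level l \<Longrightarrow> good \<sigma> \<Longrightarrow> is_level (sb \<sigma> l)"
  by (induction rule: is_level.induct) (auto simp: good_def)

lemma good_ss: "k = Ord \<or> is_level P \<Longrightarrow> good (ss k d P)"
  by (auto simp: good_def ss_def)

lemma good_up: "good \<sigma> \<Longrightarrow> good (up k \<sigma>)"
  by (auto simp: good_def up_def lv_lift split: nat.split)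

lemma lv_subst: "is_level l \<Longrightarrow> k = Ord \<or> is_level P \<Longrightarrow> is_level (subst k d P l)"
  by (simp add: subst_sb lv_sb good_ss)

lemma lv_sb_eq: "is_level i \<Longrightarrow> (\<forall>n. \<sigma> Lev n = \<sigma>' Lev n) \<Longrightarrow> sb \<sigma> i = sb \<sigma>' i"
  by (induction rule: is_level.induct) auto

definition cldefs :: "'c signature \<Rightarrow> bool" where
  "cldefs \<Sigma> \<longleftrightarrow> (\<forall>c A M. \<Sigma> c = Some (A, M) \<longrightarrow> closed M)"

inductive par :: "'c signature \<Rightarrow> 'c trm \<Rightarrow> 'c trm \<Rightarrow> bool" for \<Sigma> where
  p_var: "par \<Sigma> (Var k n) (Var k n)"
| p_cst: "par \<Sigma> (Cst c) (Cst c)"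
| p_type: "par \<Sigma> TypeS TypeS"
| p_kind: "par \<Sigma> KindS KindS"
| p_app: "par \<Sigma> M M' \<Longrightarrow> par \<Sigma> N N' \<Longrightarrow> par \<Sigma> (App M N) (App M' N')"
| p_lam: "par \<Sigma> A A' \<Longrightarrow> par \<Sigma> M M' \<Longrightarrow> par \<Sigma> (Lam k A M) (Lam k A' M')"
| p_picong: "par \<Sigma> A A' \<Longrightarrow> par \<Sigma> M M' \<Longrightarrow> par \<Sigma> (Pi k A M) (Pi k A' M')"
| p_beta: "par \<Sigma> M M' \<Longrightarrow> par \<Sigma> N N' \<Longrightarrow> k = Ord \<or> is_level N \<Longrightarrow>
    par \<Sigma> (App (Lam k A M) N) (subst k 0 N' M')"
| p_u: "is_level i' \<Longrightarrow> is_level i \<Longrightarrow> par \<Sigma> (ElT i' (uT i)) (UT i)"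
| p_pi: "is_level i' \<Longrightarrow> is_level iA \<Longrightarrow> is_level iB \<Longrightarrow> par \<Sigma> A A' \<Longrightarrow> par \<Sigma> B B' \<Longrightarrow>
    par \<Sigma> (ElT i' (piT iA iB A B))
      (Pi Ord (ElT iA A') (ElT (lift Ord 0 iB) (App (lift Ord 0 B') (Var Ord 0))))"
| p_delta: "\<Sigma> c = Some (A, M) \<Longrightarrow> par \<Sigma> (Cst (CUser c)) M"

lemma par_refl: "par \<Sigma> M M"
  by (induction M) (auto intro: par.intros)

lemma par_app_cst: "par \<Sigma> (App (Cst c) l) X \<Longrightarrow> c = Cs \<or> c = Cmax \<Longrightarrow> \<exists>l'. X = App (Cst c) l' \<and> par \<Sigma> l l'"
  by (erule par.cases) (auto elim: par.cases)

lemma par_app_app_cst: "par \<Sigma> (App (App (Cst c) l1) l2) X \<Longrightarrow> c = Cmax \<Longrightarrow>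
   \<exists>l1' l2'. X = App (App (Cst c) l1') l2' \<and> par \<Sigma> l1 l1' \<and> par \<Sigma> l2 l2'"
  by (erule par.cases) (auto dest!: par_app_cst)

lemma par_level: "is_level l \<Longrightarrow> par \<Sigma> l l' \<Longrightarrow> l' = l"
proof (induction arbitrary: l' rule: is_level.induct)
  case (lv_var n) then show ?case by (auto elim: par.cases)
next
  case lv_z then show ?case by (auto elim: par.cases)
next
  case (lv_s l) then show ?case by (auto dest!: par_app_cst)
next
  case (lv_max l l') then show ?case by (auto dest!: par_app_app_cst)
qed

lemma step_par: "step \<Sigma> M N \<Longrightarrow> par \<Sigma> M N"
  by (induction rule: step.induct) (auto intro: par.intros par_refl)

lemma rtranclp_map: "r\<^sup>*\<^sup>* a b \<Longrightarrow> (\<And>x y. r x y \<Longrightarrow> s (f x) (f y)) \<Longrightarrow> s\<^sup>*\<^sup>* (f a) (f b)"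
  by (induction rule: rtranclp_induct) (auto intro: rtranclp.rtrancl_into_rtrancl)

lemma steps_app: "(step \<Sigma>)\<^sup>*\<^sup>* M M' \<Longrightarrow> (step \<Sigma>)\<^sup>*\<^sup>* N N' \<Longrightarrow> (step \<Sigma>)\<^sup>*\<^sup>* (App M N) (App M' N')"
proof -
  assume a: "(step \<Sigma>)\<^sup>*\<^sup>* M M'" and b: "(step \<Sigma>)\<^sup>*\<^sup>* N N'"
  have "(step \<Sigma>)\<^sup>*\<^sup>* (App M N) (App M' N)" using rtranclp_map[OF a, of "step \<Sigma>" "\<lambda>x. App x N"] by (auto intro: step.intros)
  moreover have "(step \<Sigma>)\<^sup>*\<^sup>* (App M' N) (App M' N')" using rtranclp_map[OF b, of "step \<Sigma>" "\<lambda>x. App M' x"] by (auto intro: step.intros)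
  ultimately show ?thesis by auto
qed

lemma steps_lam: "(step \<Sigma>)\<^sup>*\<^sup>* M M' \<Longrightarrow> (step \<Sigma>)\<^sup>*\<^sup>* N N' \<Longrightarrow> (step \<Sigma>)\<^sup>*\<^sup>* (Lam k M N) (Lam k M' N')"
proof -
  assume a: "(step \<Sigma>)\<^sup>*\<^sup>* M M'" and b: "(step \<Sigma>)\<^sup>*\<^sup>* N N'"
  have "(step \<Sigma>)\<^sup>*\<^sup>* (Lam k M N) (Lam k M' N)" using rtranclp_map[OF a, of "step \<Sigma>" "\<lambda>x. Lam k x N"] by (auto intro: step.intros)
  moreover have "(step \<Sigma>)\<^sup>*\<^sup>* (Lam k M' N) (Lam k M' N')" using rtranclp_map[OF b, of "step \<Sigma>" "\<lambda>x. Lam k M' x"] by (auto intro: step.intros)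
  ultimately show ?thesis by auto
qed

lemma steps_pi: "(step \<Sigma>)\<^sup>*\<^sup>* M M' \<Longrightarrow> (step \<Sigma>)\<^sup>*\<^sup>* N N' \<Longrightarrow> (step \<Sigma>)\<^sup>*\<^sup>* (Pi k M N) (Pi k M' N')"
proof -
  assume a: "(step \<Sigma>)\<^sup>*\<^sup>* M M'" and b: "(step \<Sigma>)\<^sup>*\<^sup>* N N'"
  have "(step \<Sigma>)\<^sup>*\<^sup>* (Pi k M N) (Pi k M' N)" using rtranclp_map[OF a, of "step \<Sigma>" "\<lambda>x. Pi k x N"] by (auto intro: step.intros)
  moreover have "(step \<Sigma>)\<^sup>*\<^sup>* (Pi k M' N) (Pi k M' N')" using rtranclp_map[OF b, of "step \<Sigma>" "\<lambda>x. Pi k M' x"] by (auto intro: step.intros)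
  ultimately show ?thesis by auto
qed

lemma par_steps: "par \<Sigma> M N \<Longrightarrow> (step \<Sigma>)\<^sup>*\<^sup>* M N"
proof (induction rule: par.induct)
  case (p_app M M' N N') show ?case using p_app.IH by (rule steps_app)
next
  case (p_lam A A' M M' k) show ?case using p_lam.IH by (rule steps_lam)
next
  case (p_picong A A' M M' k) show ?case using p_picong.IH by (rule steps_pi)
next
  case (p_beta M M' N N' k A)
  have "(step \<Sigma>)\<^sup>*\<^sup>* (App (Lam k A M) N) (App (Lam k A M') N')"
    using p_beta by (intro steps_app steps_lam) auto
  moreover have "k = Ord \<or> is_level N'" using p_beta par_level by metis
  ultimately show ?case by (auto intro: step.beta rtranclp.rtrancl_into_rtrancl)
next
  case (p_u i' i) then show ?case by (auto intro: step.intros)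
next
  case (p_pi i' iA iB A A' B B')
  have "(step \<Sigma>)\<^sup>*\<^sup>* (ElT i' (piT iA iB A B)) (ElT i' (piT iA iB A' B'))"
    using p_pi by (intro steps_app) auto
  then show ?case using p_pi by (auto intro: step.rw_pi rtranclp.rtrancl_into_rtrancl)
next
  case (p_delta c A M) then show ?case by (auto intro: step.intros)
qed auto

lemma par_ren: "par \<Sigma> M M' \<Longrightarrow> cldefs \<Sigma> \<Longrightarrow> par \<Sigma> (ren \<xi> M) (ren \<xi> M')"
proof (induction arbitrary: \<xi> rule: par.induct)
  case (p_beta M M' N N' k A)
  then show ?case by (auto simp: ren_subst0 lv_ren intro!: par.p_beta)
next
  case (p_u i' i) then show ?case by (auto simp: lv_ren intro!: par.p_u[simplified])
next
  case (p_pi i' iA iB A A' B B')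
  then show ?case using par.p_pi[of "ren \<xi> i'" "ren \<xi> iA" "ren \<xi> iB" \<Sigma> "ren \<xi> A" "ren \<xi> A'" "ren \<xi> B" "ren \<xi> B'"]
    by (auto simp: lv_ren ren_lift0 upr_def)
next
  case (p_delta c A M) then show ?case by (auto simp: cldefs_def closed_ren intro: par.p_delta)
qed (auto intro: par.intros)

lemma par_lift: "par \<Sigma> M M' \<Longrightarrow> cldefs \<Sigma> \<Longrightarrow> par \<Sigma> (lift k d M) (lift k d M')"
  by (simp add: lift_ren par_ren)

lemma par_sb: "par \<Sigma> M M' \<Longrightarrow> cldefs \<Sigma> \<Longrightarrow> (\<forall>k n. par \<Sigma> (\<sigma> k n) (\<sigma>' k n)) \<Longrightarrow> good \<sigma> \<Longrightarrow>
  par \<Sigma> (sb \<sigma> M) (sb \<sigma>' M')"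
proof (induction arbitrary: \<sigma> \<sigma>' rule: par.induct)
  case (p_lam A A' M M' k)
  have U: "\<forall>k' n. par \<Sigma> (up k \<sigma> k' n) (up k \<sigma>' k' n)"
    using p_lam.prems by (auto simp: up_def par_lift intro: par.intros split: nat.split)
  then show ?case using p_lam.IH(1)[OF p_lam.prems] p_lam.IH(2)[OF p_lam.prems(1) U good_up[OF p_lam.prems(3)]] by (auto intro: par.intros)
next
  case (p_picong A A' M M' k)
  have U: "\<forall>k' n. par \<Sigma> (up k \<sigma> k' n) (up k \<sigma>' k' n)"
    using p_picong.prems by (auto simp: up_def par_lift intro: par.intros split: nat.split)
  then show ?case using p_picong.IH(1)[OF p_picong.prems] p_picong.IH(2)[OF p_picong.prems(1) U good_up[OF p_picong.prems(3)]] by (auto intro: par.intros)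
next
  case (p_beta M M' N N' k A)
  have U: "\<forall>k' n. par \<Sigma> (up k \<sigma> k' n) (up k \<sigma>' k' n)"
    using p_beta.prems by (auto simp: up_def par_lift intro: par.intros split: nat.split)
  then show ?case using p_beta.IH(1)[OF p_beta.prems(1) U good_up[OF p_beta.prems(3)]] p_beta.IH(2)[OF p_beta.prems] p_beta.hyps p_beta.prems
    by (auto simp: sb_subst0 lv_sb intro!: par.p_beta)
next
  case (p_u i' i)
  have eq: "\<forall>n. \<sigma> Lev n = \<sigma>' Lev n" using p_u.prems par_level by (metis good_def)
  then have "sb \<sigma>' i = sb \<sigma> i" using p_u lv_sb_eq by metis
  then show ?case using p_u by (auto simp: lv_sb intro!: par.p_u[simplified])
next
  case (p_pi i' iA iB A A' B B')
  have eq: "\<forall>n. \<sigma> Lev n = \<sigma>' Lev n" using p_pi.prems par_level by (metis good_def)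
  then have e1: "sb \<sigma>' iA = sb \<sigma> iA" "sb \<sigma>' iB = sb \<sigma> iB" using p_pi lv_sb_eq by metis+
  have "par \<Sigma> (sb \<sigma> A) (sb \<sigma>' A')" "par \<Sigma> (sb \<sigma> B) (sb \<sigma>' B')" using p_pi by auto
  then show ?case using par.p_pi[of "sb \<sigma> i'" "sb \<sigma> iA" "sb \<sigma> iB" \<Sigma> "sb \<sigma> A" "sb \<sigma>' A'" "sb \<sigma> B" "sb \<sigma>' B'"] p_pi
    by (auto simp: lv_sb sb_lift0 up_def e1)
next
  case (p_delta c A M) then show ?case by (auto simp: cldefs_def closed_sb intro: par.p_delta)
qed (auto intro: par.intros)

lemma par_subst0: "par \<Sigma> M M' \<Longrightarrow> par \<Sigma> N N' \<Longrightarrow> cldefs \<Sigma> \<Longrightarrow> k = Ord \<or> is_level N \<Longrightarrow>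
  par \<Sigma> (subst k 0 N M) (subst k 0 N' M')"
  unfolding subst_sb
  by (rule par_sb) (auto simp: ss_def good_ss intro: par.intros)




fun getLam :: "'c trm \<Rightarrow> (vkind \<times> 'c trm \<times> 'c trm) option" where
  "getLam (Lam k A B) = Some (k, A, B)"
| "getLam _ = None"

fun getEl :: "'c trm \<Rightarrow> 'c trm option" where
  "getEl (App (Cst c) i) = (if c = CEl \<and> is_level i then Some i else None)"
| "getEl _ = None"

fun getU :: "'c trm \<Rightarrow> 'c trm option" where
  "getU (App (Cst c) i) = (if c = Cu \<and> is_level i then Some i else None)"
| "getU _ = None"

fun getPi :: "'c trm \<Rightarrow> ('c trm \<times> 'c trm \<times> 'c trm \<times> 'c trm) option" where
  "getPi (App (App (App (App (Cst c) iA) iB) A) B) =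
     (if c = Cpi \<and> is_level iA \<and> is_level iB then Some (iA, iB, A, B) else None)"
| "getPi _ = None"

lemma getLam_Some: "getLam M = Some (k, A, B) \<longleftrightarrow> M = Lam k A B"
  by (cases M rule: getLam.cases) auto

lemma getEl_Some: "getEl M = Some i \<longleftrightarrow> M = App (Cst CEl) i \<and> is_level i"
  by (cases M rule: getEl.cases) auto

lemma getU_Some: "getU M = Some i \<longleftrightarrow> M = uT i \<and> is_level i"
  by (cases M rule: getU.cases) auto

lemma getPi_Some: "getPi M = Some (iA, iB, A, B) \<longleftrightarrow> M = piT iA iB A B \<and> is_level iA \<and> is_level iB"
  by (cases M rule: getPi.cases) auto

lemma getLam_size: "getLam M = Some (k, A, B) \<Longrightarrow> size B < size M"
  by (simp add: getLam_Some)

lemma getPi_size: "getPi N = Some (iA, iB, A, B) \<Longrightarrow> size A < size N \<and> size B < size N"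
  by (simp add: getPi_Some)

function dev :: "'c signature \<Rightarrow> 'c trm \<Rightarrow> 'c trm" where
  "dev \<Sigma> (Var k n) = Var k n"
| "dev \<Sigma> (Cst c) = (case c of CUser u \<Rightarrow> (case \<Sigma> u of Some (A, M) \<Rightarrow> M | None \<Rightarrow> Cst c) | _ \<Rightarrow> Cst c)"
| "dev \<Sigma> (App M N) = (case getLam M of
     Some (k, A, B) \<Rightarrow> (if k = Ord \<or> is_level N then subst k 0 (dev \<Sigma> N) (dev \<Sigma> B)
                        else App (dev \<Sigma> M) (dev \<Sigma> N))
   | None \<Rightarrow> (case getEl M of
       Some i' \<Rightarrow> (case getU N of
           Some i \<Rightarrow> UT i
         | None \<Rightarrow> (case getPi N of
             Some (iA, iB, A, B) \<Rightarrow>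
               Pi Ord (ElT iA (dev \<Sigma> A)) (ElT (lift Ord 0 iB) (App (lift Ord 0 (dev \<Sigma> B)) (Var Ord 0)))
           | None \<Rightarrow> App (dev \<Sigma> M) (dev \<Sigma> N)))
     | None \<Rightarrow> App (dev \<Sigma> M) (dev \<Sigma> N)))"
| "dev \<Sigma> (Lam k A M) = Lam k (dev \<Sigma> A) (dev \<Sigma> M)"
| "dev \<Sigma> (Pi k A M) = Pi k (dev \<Sigma> A) (dev \<Sigma> M)"
| "dev \<Sigma> TypeS = TypeS"
| "dev \<Sigma> KindS = KindS"
  by pat_completeness auto
termination
  by (relation "measure (\<lambda>(\<Sigma>, M). size M)")
     (auto dest: getLam_size getPi_size)

lemma dev_beta: "k = Ord \<or> is_level N \<Longrightarrow> dev \<Sigma> (App (Lam k A B) N) = subst k 0 (dev \<Sigma> N) (dev \<Sigma> B)"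
  by simp

lemma dev_u: "is_level i' \<Longrightarrow> is_level i \<Longrightarrow> dev \<Sigma> (ElT i' (uT i)) = UT i"
  by simp

lemma dev_pi: "is_level i' \<Longrightarrow> is_level iA \<Longrightarrow> is_level iB \<Longrightarrow>
  dev \<Sigma> (ElT i' (piT iA iB A B)) = Pi Ord (ElT iA (dev \<Sigma> A)) (ElT (lift Ord 0 iB) (App (lift Ord 0 (dev \<Sigma> B)) (Var Ord 0)))"
  by simp

lemma dev_piT: "dev \<Sigma> (piT iA iB A B) = piT (dev \<Sigma> iA) (dev \<Sigma> iB) (dev \<Sigma> A) (dev \<Sigma> B)"
  by simp

lemma dev_level: "is_level l \<Longrightarrow> dev \<Sigma> l = l"
  by (induction rule: is_level.induct) auto

lemma dev_other: "\<not> (\<exists>k A B. M = Lam k A B \<and> (k = Ord \<or> is_level N)) \<Longrightarrow>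
  \<not> (\<exists>i' i. M = App (Cst CEl) i' \<and> N = uT i \<and> is_level i' \<and> is_level i) \<Longrightarrow>
  \<not> (\<exists>i' iA iB A B. M = App (Cst CEl) i' \<and> N = piT iA iB A B \<and> is_level i' \<and> is_level iA \<and> is_level iB) \<Longrightarrow>
  dev \<Sigma> (App M N) = App (dev \<Sigma> M) (dev \<Sigma> N)"
  apply (cases "getLam M"; cases "getEl M"; cases "getU N"; cases "getPi N")
  apply (auto simp: getLam_Some getEl_Some getU_Some getPi_Some)
  done

lemma par_cst_inv: "par \<Sigma> (Cst c) X \<Longrightarrow> (\<forall>u. c \<noteq> CUser u) \<Longrightarrow> X = Cst c"
  by (erule par.cases) auto

lemma par_app_inv: "par \<Sigma> (App M N) X \<Longrightarrow> (\<forall>k A B. M \<noteq> Lam k A B) \<Longrightarrow> (\<forall>i'. M \<noteq> App (Cst CEl) i') \<Longrightarrow>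
   \<exists>M' N'. X = App M' N' \<and> par \<Sigma> M M' \<and> par \<Sigma> N N'"
  by (erule par.cases) auto

lemma par_lam_inv: "par \<Sigma> (Lam k A M) X \<Longrightarrow> \<exists>A' M'. X = Lam k A' M' \<and> par \<Sigma> A A' \<and> par \<Sigma> M M'"
  by (erule par.cases) auto

lemma par_El_inv: "par \<Sigma> (App (Cst CEl) i') X \<Longrightarrow> is_level i' \<Longrightarrow> X = App (Cst CEl) i'"
  using par_level by (fastforce dest!: par_app_inv par_cst_inv)

lemma par_uT_inv: "par \<Sigma> (uT i) X \<Longrightarrow> is_level i \<Longrightarrow> X = uT i"
  using par_level by (fastforce dest!: par_app_inv par_cst_inv)

lemma par_piT_inv: "par \<Sigma> (piT iA iB A B) X \<Longrightarrow> is_level iA \<Longrightarrow> is_level iB \<Longrightarrow>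
   \<exists>A' B'. X = piT iA iB A' B' \<and> par \<Sigma> A A' \<and> par \<Sigma> B B'"
proof -
  assume a: "par \<Sigma> (piT iA iB A B) X" "is_level iA" "is_level iB"
  from par_app_inv[OF a(1)] obtain X1 B' where 1: "X = App X1 B'" "par \<Sigma> (App (App (App (Cst Cpi) iA) iB) A) X1" "par \<Sigma> B B'" by auto
  from par_app_inv[OF 1(2)] obtain X2 A' where 2: "X1 = App X2 A'" "par \<Sigma> (App (App (Cst Cpi) iA) iB) X2" "par \<Sigma> A A'" by auto
  from par_app_inv[OF 2(2)] obtain X3 iB' where 3: "X2 = App X3 iB'" "par \<Sigma> (App (Cst Cpi) iA) X3" "par \<Sigma> iB iB'" by auto
  from par_app_inv[OF 3(2)] obtain X4 iA' where 4: "X3 = App X4 iA'" "par \<Sigma> (Cst Cpi) X4" "par \<Sigma> iA iA'" by auto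
  have "X4 = Cst Cpi" using par_cst_inv[OF 4(2)] by auto
  moreover have "iA' = iA" "iB' = iB" using par_level a 3 4 by metis+
  ultimately show ?thesis using 1 2 3 4 by auto
qed

lemma par_dev: "par \<Sigma> M N \<Longrightarrow> cldefs \<Sigma> \<Longrightarrow> par \<Sigma> N (dev \<Sigma> M)"
proof (induction rule: par.induct)
  case (p_cst c)
  then show ?case by (auto intro: par.intros split: const.split option.split)
next
  case (p_app M M' N N')
  show ?case
  proof (cases "\<exists>k A B. M = Lam k A B \<and> (k = Ord \<or> is_level N)")
    case True
    then obtain k A B where t: "M = Lam k A B" "k = Ord \<or> is_level N" by auto
    obtain A' B' where m': "M' = Lam k A' B'" using par_lam_inv p_app.hyps(1) t by blast
    have "par \<Sigma> (Lam k A' B') (Lam k (dev \<Sigma> A) (dev \<Sigma> B))" using p_app.IH(1) p_app.prems t m' by simp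
    then have b: "par \<Sigma> B' (dev \<Sigma> B)" using par_lam_inv by blast
    have c: "k = Ord \<or> is_level N'" using t p_app.hyps par_level by metis
    show ?thesis using t m' b c p_app by (auto intro!: par.p_beta)
  next
    case F1: False
    show ?thesis
    proof (cases "\<exists>i' i. M = App (Cst CEl) i' \<and> N = uT i \<and> is_level i' \<and> is_level i")
      case True
      then obtain i' i where t: "M = App (Cst CEl) i'" "N = uT i" "is_level i'" "is_level i" by auto
      have "M' = M" "N' = N" using t p_app.hyps par_El_inv par_uT_inv by metis+
      then show ?thesis using t by (auto intro: par.intros)
    next
      case F2: False
      show ?thesis
      proof (cases "\<exists>i' iA iB A B. M = App (Cst CEl) i' \<and> N = piT iA iB A B \<and> is_level i' \<and> is_level iA \<and> is_level iB")
        case True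
        then obtain i' iA iB A B where t: "M = App (Cst CEl) i'" "N = piT iA iB A B" "is_level i'" "is_level iA" "is_level iB" by auto
        have m: "M' = M" using t p_app.hyps par_El_inv by metis
        obtain A' B' where n: "N' = piT iA iB A' B'" using par_piT_inv p_app.hyps(2) t by metis
        have "dev \<Sigma> N = piT iA iB (dev \<Sigma> A) (dev \<Sigma> B)"
          using t by (simp add: dev_piT dev_level)
        then have "par \<Sigma> (piT iA iB A' B') (piT iA iB (dev \<Sigma> A) (dev \<Sigma> B))" using p_app n by simp
        then have ab: "par \<Sigma> A' (dev \<Sigma> A)" "par \<Sigma> B' (dev \<Sigma> B)" using par_piT_inv t by fastforce+
        have "dev \<Sigma> (App M N) = Pi Ord (ElT iA (dev \<Sigma> A)) (ElT (lift Ord 0 iB) (App (lift Ord 0 (dev \<Sigma> B)) (Var Ord 0)))"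
          using t by (simp add: dev_pi)
        then show ?thesis using m n t ab by (auto intro!: par.p_pi)
      next
        case F3: False
        show ?thesis using dev_other[OF F1 F2 F3] p_app by (auto intro: par.intros)
      qed
    qed
  qed
next
  case (p_beta M M' N N' k A)
  have c: "k = Ord \<or> is_level N'" using p_beta par_level by metis
  then show ?case using p_beta by (auto intro!: par_subst0)
next
  case (p_u i' i) then show ?case by (auto intro: par_refl)
next
  case (p_pi i' iA iB A A' B B')
  then show ?case by (auto intro!: par.intros par_lift par_refl)
next
  case (p_delta c A M) then show ?case by (auto intro: par_refl)
qed (auto intro: par.intros)




lemma par_strong: "cldefs \<Sigma> \<Longrightarrow> strong_confluentp (par \<Sigma>)"
  by (rule strong_confluentpI) (meson par_dev r_into_rtranclp rtranclp.rtrancl_refl sup2CI)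

lemma par_rtc_eq: "(par \<Sigma>)\<^sup>*\<^sup>* = (step \<Sigma>)\<^sup>*\<^sup>*"
proof (rule antisym)
  have "par \<Sigma> \<le> (step \<Sigma>)\<^sup>*\<^sup>*" using par_steps by blast
  then have "(par \<Sigma>)\<^sup>*\<^sup>* \<le> ((step \<Sigma>)\<^sup>*\<^sup>*)\<^sup>*\<^sup>*" by (rule rtranclp_mono)
  then show "(par \<Sigma>)\<^sup>*\<^sup>* \<le> (step \<Sigma>)\<^sup>*\<^sup>*" by simp
next
  have "step \<Sigma> \<le> par \<Sigma>" using step_par by blast
  then show "(step \<Sigma>)\<^sup>*\<^sup>* \<le> (par \<Sigma>)\<^sup>*\<^sup>*" by (rule rtranclp_mono)
qed

lemma confluent_step: "cldefs \<Sigma> \<Longrightarrow> confluentp (step \<Sigma>)"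
proof -
  assume "cldefs \<Sigma>"
  then have "confluentp (par \<Sigma>)" by (intro strong_confluentp_imp_confluentp par_strong)
  then show ?thesis unfolding confluentp_def rtranclp_conversep par_rtc_eq .
qed

inductive lq :: "'c trm \<Rightarrow> 'c trm \<Rightarrow> bool" where
  lq_var: "lq (Var k n) (Var k n)"
| lq_cst: "lq (Cst c) (Cst c)"
| lq_type: "lq TypeS TypeS"
| lq_kind: "lq KindS KindS"
| lq_app: "lq M M' \<Longrightarrow> lq N N' \<Longrightarrow> lq (App M N) (App M' N')"
| lq_lam: "lq A A' \<Longrightarrow> lq M M' \<Longrightarrow> lq (Lam k A M) (Lam k A' M')"
| lq_pi: "lq A A' \<Longrightarrow> lq M M' \<Longrightarrow> lq (Pi k A M) (Pi k A' M')"
| lq_lev: "is_level l \<Longrightarrow> is_level l' \<Longrightarrow> leveq l l' \<Longrightarrow> lq l l'"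

lemma lq_refl: "lq M M"
  by (induction M) (auto intro: lq.intros)

lemma lq_sym: "lq M N \<Longrightarrow> lq N M"
  by (induction rule: lq.induct) (auto intro: lq.intros leveq.sym)

lemma lq_leveq: "lq M N \<Longrightarrow> leveq M N"
  by (induction rule: lq.induct) (auto intro: leveq.intros)

lemma leveq_lift: "leveq M N \<Longrightarrow> leveq (lift k d M) (lift k d N)"
proof (induction arbitrary: k d rule: leveq.induct)
  case (subst_cl M N k0 P d0)
  show ?case unfolding lift_subst
    using subst_cl by (auto intro!: leveq.subst_cl simp: lv_lift)
next
  case (trans M N P) then show ?case by (blast intro: leveq.trans)
qed (auto intro: leveq.intros simp: lv_lift)

lemma lq_cst_inv: "lq (Cst c) X \<Longrightarrow> c \<noteq> Cz \<Longrightarrow> X = Cst c"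
  by (erule lq.cases) auto

lemma lq_app_inv: "lq (App M N) X \<Longrightarrow>
  (\<exists>M' N'. X = App M' N' \<and> lq M M' \<and> lq N N') \<or> (is_level (App M N) \<and> is_level X \<and> leveq (App M N) X)"
  by (erule lq.cases) auto

lemma lq_level: "is_level M \<Longrightarrow> lq M N \<Longrightarrow> is_level N \<and> leveq M N"
proof (induction arbitrary: N rule: is_level.induct)
  case (lv_var n) then show ?case by (auto elim: lq.cases intro: leveq.refl)
next
  case lv_z then show ?case by (auto elim: lq.cases intro: leveq.refl)
next
  case (lv_s l)
  from lq_app_inv[OF lv_s.prems] show ?case
  proof
    assume "\<exists>M' N'. N = App M' N' \<and> lq (Cst Cs) M' \<and> lq l N'"
    then obtain M' N' where a: "N = App M' N'" "lq (Cst Cs) M'" "lq l N'" by blast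
    then have "M' = Cst Cs" using lq_cst_inv by blast
    then show ?thesis using lv_s.IH a by (auto intro: leveq.cong_app leveq.refl)
  qed auto
next
  case (lv_max l l')
  from lq_app_inv[OF lv_max.prems] show ?case
  proof
    assume "\<exists>M' N'. N = App M' N' \<and> lq (App (Cst Cmax) l) M' \<and> lq l' N'"
    then obtain M' N' where a: "N = App M' N'" "lq (App (Cst Cmax) l) M'" "lq l' N'" by blast
    from lq_app_inv[OF a(2)] obtain X Y where b: "M' = App X Y" "lq (Cst Cmax) X" "lq l Y" by auto
    have "X = Cst Cmax" using b lq_cst_inv by blast
    then show ?thesis using a b lv_max.IH by (auto intro: leveq.cong_app leveq.refl)
  qed auto
qed

lemma lq_level2: "is_level N \<Longrightarrow> lq M N \<Longrightarrow> is_level M \<and> leveq M N"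
  using lq_level lq_sym leveq.sym by metis

lemma lq_trans: "lq M N \<Longrightarrow> lq N P \<Longrightarrow> lq M P"
proof (induction arbitrary: P rule: lq.induct)
  case (lq_app M M' N N')
  show ?case
  proof (cases "is_level (App M' N')")
    case True
    then show ?thesis using lq_app.prems lq_level lq_level2 lq_app.hyps
      by (meson leveq.trans lq.lq_app lq.lq_lev)
  next
    case False
    then obtain P1 P2 where "P = App P1 P2" "lq M' P1" "lq N' P2" using lq_app_inv[OF lq_app.prems] by blast
    then show ?thesis using lq_app.IH by (auto intro: lq.intros)
  qed
next
  case (lq_lam A A' M M' k)
  from lq_lam.prems show ?case by (cases rule: lq.cases) (auto intro: lq.intros lq_lam.IH)
next
  case (lq_pi A A' M M' k)
  from lq_pi.prems show ?case by (cases rule: lq.cases) (auto intro: lq.intros lq_pi.IH)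
next
  case (lq_lev l l')
  then show ?case using lq_level by (meson leveq.trans lq.lq_lev)
qed auto

lemma lq_lift: "lq M N \<Longrightarrow> lq (lift k d M) (lift k d N)"
  by (induction arbitrary: d rule: lq.induct) (auto intro: lq.intros lq_refl simp: lv_lift leveq_lift)

lemma leveq_subst_arg: "is_level l \<Longrightarrow> leveq P P' \<Longrightarrow> leveq (subst k d P l) (subst k d P' l)"
  by (induction rule: is_level.induct) (auto intro: leveq.intros)

lemma lq_subst: "lq M M' \<Longrightarrow> lq P P' \<Longrightarrow> k = Ord \<or> is_level P \<Longrightarrow> lq (subst k d P M) (subst k d P' M')"
proof (induction arbitrary: d P P' rule: lq.induct)
  case (lq_var k' n)
  then show ?case by (auto intro: lq.intros lq_refl)
next
  case (lq_lam A A' M M' k')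
  have "lq (subst k d P A) (subst k d P' A')" using lq_lam by blast
  moreover have "lq (subst k (if k' = k then Suc d else d) (lift k' 0 P) M) (subst k (if k' = k then Suc d else d) (lift k' 0 P') M')"
    using lq_lam.IH(2)[OF lq_lift[OF lq_lam.prems(1)]] lq_lam.prems(2) by (auto simp: lv_lift)
  ultimately show ?case by (auto intro: lq.lq_lam)
next
  case (lq_pi A A' M M' k')
  have "lq (subst k d P A) (subst k d P' A')" using lq_pi by blast
  moreover have "lq (subst k (if k' = k then Suc d else d) (lift k' 0 P) M) (subst k (if k' = k then Suc d else d) (lift k' 0 P') M')"
    using lq_pi.IH(2)[OF lq_lift[OF lq_pi.prems(1)]] lq_pi.prems(2) by (auto simp: lv_lift)
  ultimately show ?case by (auto intro: lq.lq_pi)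
next
  case (lq_lev l l')
  have c': "k = Ord \<or> is_level P'" using lq_lev.prems lq_level by metis
  have "leveq (subst k d P l) (subst k d P l')" using lq_lev by (auto intro: leveq.subst_cl)
  moreover have "leveq (subst k d P l') (subst k d P' l')"
    using lq_lev leveq_subst_arg lq_leveq by metis
  ultimately show ?case using lq_lev c' by (auto intro!: lq.lq_lev lv_subst intro: leveq.trans)
qed (auto intro: lq.intros)

lemma leveq_lq: "leveq M N \<Longrightarrow> lq M N"
proof (induction rule: leveq.induct)
  case (subst_cl M N k P d)
  then show ?case by (auto intro: lq_subst lq_refl)
qed (auto intro: lq.intros leveq.intros lq_refl lq_sym lq_trans)

lemma step_app_cst: "step \<Sigma> (App (Cst c) l) X \<Longrightarrow> c = Cs \<or> c = Cmax \<Longrightarrow> \<exists>l'. X = App (Cst c) l' \<and> step \<Sigma> l l'"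
  by (erule step.cases) (auto elim: step.cases)

lemma lv_nostep: "is_level l \<Longrightarrow> \<not> step \<Sigma> l l'"
proof (induction arbitrary: l' rule: is_level.induct)
  case (lv_var n) then show ?case by (auto elim: step.cases)
next
  case lv_z then show ?case by (auto elim: step.cases)
next
  case (lv_s l) then show ?case by (auto dest!: step_app_cst)
next
  case (lv_max l l'')
  show ?case
  proof
    assume "step \<Sigma> (l \<squnion>\<^sub>L l'') l'"
    then show False
    proof (cases rule: step.cases)
      case (app1 M')
      then show False using lv_max.IH(1) by (auto dest!: step_app_cst)
    next
      case (app2 N')
      then show False using lv_max.IH(2) by auto
    qed
  qed
qed

lemma lq_app_inv2: "lq M (App X Y) \<Longrightarrow> \<not> is_level (App X Y) \<Longrightarrow> \<exists>X0 Y0. M = App X0 Y0 \<and> lq X0 X \<and> lq Y0 Y"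
  by (erule lq.cases) auto

lemma lq_lam_inv2: "lq M (Lam k A B) \<Longrightarrow> \<exists>A0 B0. M = Lam k A0 B0 \<and> lq A0 A \<and> lq B0 B"
  by (erule lq.cases) auto

lemma lq_pi_inv2: "lq M (Pi k A B) \<Longrightarrow> \<exists>A0 B0. M = Pi k A0 B0 \<and> lq A0 A \<and> lq B0 B"
  by (erule lq.cases) auto

lemma lq_cst_inv2: "lq M (Cst c) \<Longrightarrow> c \<noteq> Cz \<Longrightarrow> M = Cst c"
  by (erule lq.cases) auto

lemma lq_ElT_inv2: "lq M (App (Cst CEl) i') \<Longrightarrow> is_level i' \<Longrightarrow> \<exists>j'. M = App (Cst CEl) j' \<and> is_level j' \<and> lq j' i'"
  using lq_app_inv2 lq_cst_inv2 lq_level2 by fastforce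

lemma commute: "step \<Sigma> N N' \<Longrightarrow> lq M N \<Longrightarrow> \<exists>M'. step \<Sigma> M M' \<and> lq M' N'"
proof (induction arbitrary: M rule: step.induct)
  case (beta k P A B)
  obtain X0 Y0 where 1: "M = App X0 Y0" "lq X0 (Lam k A B)" "lq Y0 P" using lq_app_inv2[OF beta.prems] by auto
  obtain A0 B0 where 2: "X0 = Lam k A0 B0" "lq B0 B" using lq_lam_inv2[OF 1(2)] by auto
  have c: "k = Ord \<or> is_level Y0" using beta.hyps 1 lq_level2 by metis
  show ?case using 1 2 c by (auto intro!: step.beta lq_subst)
next
  case (rw_u i' i)
  obtain X0 Y0 where 1: "M = App X0 Y0" "lq X0 (App (Cst CEl) i')" "lq Y0 (uT i)" using lq_app_inv2[OF rw_u.prems] by auto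
  obtain j' where 2: "X0 = App (Cst CEl) j'" "is_level j'" using lq_ElT_inv2[OF 1(2)] rw_u by auto
  obtain U0 j where 3: "Y0 = App U0 j" "lq U0 (Cst Cu)" "lq j i" using lq_app_inv2[OF 1(3)] rw_u by auto
  have "U0 = Cst Cu" "is_level j" using 3 lq_cst_inv2 lq_level2 rw_u by auto
  then show ?case using 1 2 3 by (auto intro!: step.rw_u lq.intros)
next
  case (rw_pi i' iA iB A B)
  obtain X0 Y0 where 1: "M = App X0 Y0" "lq X0 (App (Cst CEl) i')" "lq Y0 (piT iA iB A B)" using lq_app_inv2[OF rw_pi.prems] by auto
  obtain j' where 2: "X0 = App (Cst CEl) j'" "is_level j'" using lq_ElT_inv2[OF 1(2)] rw_pi by auto
  obtain Y1 B0 where 3: "Y0 = App Y1 B0" "lq Y1 (App (App (App (Cst Cpi) iA) iB) A)" "lq B0 B" using lq_app_inv2[OF 1(3)] by auto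
  obtain Y2 A0 where 4: "Y1 = App Y2 A0" "lq Y2 (App (App (Cst Cpi) iA) iB)" "lq A0 A" using lq_app_inv2[OF 3(2)] by auto
  obtain Y3 jB where 5: "Y2 = App Y3 jB" "lq Y3 (App (Cst Cpi) iA)" "lq jB iB" using lq_app_inv2[OF 4(2)] by auto
  obtain Y4 jA where 6: "Y3 = App Y4 jA" "lq Y4 (Cst Cpi)" "lq jA iA" using lq_app_inv2[OF 5(2)] by auto
  have "Y4 = Cst Cpi" "is_level jA" "is_level jB" using 5 6 lq_cst_inv2 lq_level2 rw_pi by auto
  then show ?case using 1 2 3 4 5 6
    by (auto intro!: step.rw_pi lq.intros lq_lift lq_refl)
next
  case (delta c A M0)
  then show ?case using lq_cst_inv2 by (blast intro: step.delta lq_refl)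
next
  case (app1 X X' Y)
  have "\<not> is_level (App X Y)" using lv_nostep app1.hyps step.app1 by metis
  then obtain X0 Y0 where "M = App X0 Y0" "lq X0 X" "lq Y0 Y" using lq_app_inv2[OF app1.prems] by auto
  then show ?case using app1.IH by (blast intro: step.app1 lq.intros)
next
  case (app2 Y Y' X)
  have "\<not> is_level (App X Y)" using lv_nostep app2.hyps step.app2 by metis
  then obtain X0 Y0 where "M = App X0 Y0" "lq X0 X" "lq Y0 Y" using lq_app_inv2[OF app2.prems] by auto
  then show ?case using app2.IH by (blast intro: step.app2 lq.intros)
next
  case (lam1 A A' k B)
  then obtain A0 B0 where "M = Lam k A0 B0" "lq A0 A" "lq B0 B" using lq_lam_inv2 by blast
  then show ?case using lam1.IH by (blast intro: step.lam1 lq.intros)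
next
  case (lam2 B B' k A)
  then obtain A0 B0 where "M = Lam k A0 B0" "lq A0 A" "lq B0 B" using lq_lam_inv2 by blast
  then show ?case using lam2.IH by (blast intro: step.lam2 lq.intros)
next
  case (pi1 A A' k B)
  then obtain A0 B0 where "M = Pi k A0 B0" "lq A0 A" "lq B0 B" using lq_pi_inv2 by blast
  then show ?case using pi1.IH by (blast intro: step.pi1 lq.intros)
next
  case (pi2 B B' k A)
  then obtain A0 B0 where "M = Pi k A0 B0" "lq A0 A" "lq B0 B" using lq_pi_inv2 by blast
  then show ?case using pi2.IH by (blast intro: step.pi2 lq.intros)
qed

lemma commute_leveq: "leveq M N \<Longrightarrow> step \<Sigma> N N' \<Longrightarrow> \<exists>M'. step \<Sigma> M M' \<and> leveq M' N'"
  using commute leveq_lq lq_leveq by metis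

lemma commute_star: "(step \<Sigma>)\<^sup>*\<^sup>* N N' \<Longrightarrow> leveq M N \<Longrightarrow> \<exists>M'. (step \<Sigma>)\<^sup>*\<^sup>* M M' \<and> leveq M' N'"
proof (induction arbitrary: M rule: rtranclp_induct)
  case base then show ?case by blast
next
  case (step Q Q')
  then obtain M1 where "(step \<Sigma>)\<^sup>*\<^sup>* M M1" "leveq M1 Q" by blast
  moreover obtain M2 where "step \<Sigma> M1 M2" "leveq M2 Q'" using commute_leveq calculation(2) step.hyps(2) by metis
  ultimately show ?case by (meson rtranclp.rtrancl_into_rtrancl)
qed

lemma conv_join: "cldefs \<Sigma> \<Longrightarrow> conv \<Sigma> M N \<Longrightarrow>
  \<exists>M' N'. (step \<Sigma>)\<^sup>*\<^sup>* M M' \<and> (step \<Sigma>)\<^sup>*\<^sup>* N N' \<and> leveq M' N'"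
proof -
  assume cl: "cldefs \<Sigma>" and "conv \<Sigma> M N"
  then have "(symclp (\<lambda>M N. step \<Sigma> M N \<or> leveq M N))\<^sup>*\<^sup>* M N" by (simp add: conv_def equivclp_def)
  then show ?thesis
  proof (induction rule: rtranclp_induct)
    case base then show ?case by (blast intro: leveq.refl)
  next
    case (step N P)
    then obtain M' N' where h: "(step \<Sigma>)\<^sup>*\<^sup>* M M'" "(step \<Sigma>)\<^sup>*\<^sup>* N N'" "leveq M' N'" by blast
    from step.hyps(2) have "step \<Sigma> N P \<or> leveq N P \<or> step \<Sigma> P N \<or> leveq P N"
      by (auto simp: symclp_def)
    then show ?case
    proof (elim disjE)
      assume s: "step \<Sigma> N P"
      obtain Q where q: "(step \<Sigma>)\<^sup>*\<^sup>* N' Q" "(step \<Sigma>)\<^sup>*\<^sup>* P Q"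
        using confluentpD[OF confluent_step[OF cl] h(2) r_into_rtranclp[of "step \<Sigma>", OF s]] by blast
      obtain M'' where "(step \<Sigma>)\<^sup>*\<^sup>* M' M''" "leveq M'' Q" using commute_star[OF q(1) h(3)] by blast
      then show ?case using h q by (meson rtranclp_trans)
    next
      assume s: "step \<Sigma> P N"
      then show ?case using h by (meson converse_rtranclp_into_rtranclp)
    next
      assume l: "leveq N P"
      obtain P' where "(step \<Sigma>)\<^sup>*\<^sup>* P P'" "leveq P' N'" using commute_star[OF h(2) leveq.sym[OF l]] by blast
      then show ?case using h by (meson leveq.sym leveq.trans)
    next
      assume l: "leveq P N"
      obtain P' where "(step \<Sigma>)\<^sup>*\<^sup>* P P'" "leveq P' N'" using commute_star[OF h(2) l] by blast
      then show ?case using h by (meson leveq.sym leveq.trans)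
    qed
  qed
qed

theorem mainTheorem3:
  fixes \<Sigma> :: "'c signature"
  assumes closed_defs: "\<And>c A M. \<Sigma> c = Some (A, M) \<Longrightarrow> closed M"
  shows "confluentp (step \<Sigma>)
    \<and> (\<forall>M N N'. leveq M N \<and> step \<Sigma> N N' \<longrightarrow> (\<exists>M'. step \<Sigma> M M' \<and> leveq M' N'))
    \<and> (\<forall>M N. conv \<Sigma> M N \<longrightarrow>
           (\<exists>M' N'. (step \<Sigma>)\<^sup>*\<^sup>* M M' \<and> (step \<Sigma>)\<^sup>*\<^sup>* N N' \<and> leveq M' N'))"
proof -
  have cl: "cldefs \<Sigma>" using closed_defs by (auto simp: cldefs_def)
  show ?thesis using confluent_step[OF cl] commute_leveq conv_join[OF cl] by blast
qed


end
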